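(* Let $K$ be a $p$-adic field and fix either the semi-algebraic or the subanalytic structure on $K$; "definable" refers to this structure. Let $X\subset K^r$ be a definable set, let $\lambda>0$, and let $f:X\to K$ be a definable $\lambda$-Lipschitz function. Let $X=\bigcup_{i=1}^k X_i$ be a finite covering of $X$ by definable subsets $X_i$, and put $f_i=f|_{X_i}$. Suppose that for each $i$, $f_i$ extends to a definable $\Lambda_i$-Lipschitz map $\tilde f_i:K^r\to K$, where $\Lambda_i\ge\lambda$. Then $f$ extends to a definable $\Lambda$-Lipschitz map $\tilde f:K^r\to K$, where $\Lambda=\max_i\Lambda_i$.
   Context: $K$ is a finite field extension of $\mathbb{Q}_p$, with valuation $\mathrm{ord}$, residue field of cardinality $q$, and norm $|x|=q^{-\mathrm{ord}(x)}$ (with $|0|=0$); $K^n$ carries the max-norm $|(x_1,\dots,x_n)|=\max_i|x_i|$. Definable means definable (with parameters) in the semi-algebraic structure (the field language on $K$) or in the subanalytic structure (the field language expanded by restricted analytic functions, i.e. functions on $\mathcal{O}_K^n$ given by convergent power series, extended by zero outside $\mathcal{O}_K^n$). A function $g:A\to K^s$ with $A\subset K^n$ is $\lambda$-Lipschitz if $|g(a)-g(b)|\le\lambda|a-b|$ for all $a,b\in A$. *)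

theory Defs
  imports Complex_Main
begin

text \<open>A p-adic field (finite extension of Q_p) is encoded as a field of characteristic 0
  carrying a normalized discrete valuation ord (ord 0 is irrelevant), which is complete
  for the associated absolute value and whose residue field is finite of cardinality q.
  These are exactly the finite extensions of the p-adic numbers, with q = card of the
  residue field and |x| = q^(-ord x).\<close>

definition padic_abs :: "('k::field \<Rightarrow> int) \<Rightarrow> nat \<Rightarrow> 'k \<Rightarrow> real" where
  "padic_abs ord q x = (if x = 0 then 0 else real q powr (- real_of_int (ord x)))"

definition val_ring :: "('k::field \<Rightarrow> int) \<Rightarrow> 'k set" where
  "val_ring ord = {x. x = 0 \<or> ord x \<ge> 0}"

definition max_ideal :: "('k::field \<Rightarrow> int) \<Rightarrow> 'k set" where
  "max_ideal ord = {x. x = 0 \<or> ord x > 0}"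

definition residue_field :: "('k::field \<Rightarrow> int) \<Rightarrow> 'k set set" where
  "residue_field ord = (\<lambda>x. {y \<in> val_ring ord. x - y \<in> max_ideal ord}) ` val_ring ord"

definition p_adic_field :: "('k::field_char_0 \<Rightarrow> int) \<Rightarrow> nat \<Rightarrow> bool" where
  "p_adic_field ord q \<longleftrightarrow>
     (\<forall>x y. x \<noteq> 0 \<longrightarrow> y \<noteq> 0 \<longrightarrow> ord (x * y) = ord x + ord y) \<and>
     (\<forall>x y. x \<noteq> 0 \<longrightarrow> y \<noteq> 0 \<longrightarrow> x + y \<noteq> 0 \<longrightarrow> ord (x + y) \<ge> min (ord x) (ord y)) \<and>
     (\<exists>\<pi>. \<pi> \<noteq> 0 \<and> ord \<pi> = 1) \<and>
     finite (residue_field ord) \<and> card (residue_field ord) = q \<and>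
     (\<forall>s :: nat \<Rightarrow> 'k.
        (\<forall>e>0. \<exists>N. \<forall>m\<ge>N. \<forall>n\<ge>N. padic_abs ord q (s m - s n) < e) \<longrightarrow>
        (\<exists>l. \<forall>e>0. \<exists>N. \<forall>n\<ge>N. padic_abs ord q (s n - l) < e))"

definition vec_abs :: "('k::field \<Rightarrow> int) \<Rightarrow> nat \<Rightarrow> 'k list \<Rightarrow> real" where
  "vec_abs ord q xs = Max (insert 0 (padic_abs ord q ` set xs))"

definition vec_diff :: "'k::field list \<Rightarrow> 'k list \<Rightarrow> 'k list" where
  "vec_diff xs ys = map2 (-) xs ys"

definition kspace :: "nat \<Rightarrow> 'k list set" where
  "kspace n = {xs. length xs = n}"

definition lipschitz_on :: "('k::field \<Rightarrow> int) \<Rightarrow> nat \<Rightarrow> 'k list set \<Rightarrow> ('k list \<Rightarrow> 'k) \<Rightarrow> real \<Rightarrow> bool" where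
  "lipschitz_on ord q A g lam \<longleftrightarrow>
     (\<forall>a\<in>A. \<forall>b\<in>A. padic_abs ord q (g a - g b) \<le> lam * vec_abs ord q (vec_diff a b))"

definition restricted_series :: "('k::field \<Rightarrow> int) \<Rightarrow> nat \<Rightarrow> nat \<Rightarrow> (nat list \<Rightarrow> 'k) \<Rightarrow> bool" where
  "restricted_series ord q n a \<longleftrightarrow>
     (\<forall>e>0. finite {I. length I = n \<and> padic_abs ord q (a I) \<ge> e})"

definition partial_sum :: "nat \<Rightarrow> (nat list \<Rightarrow> 'k::field) \<Rightarrow> 'k list \<Rightarrow> nat \<Rightarrow> 'k" where
  "partial_sum n a xs N =
     (\<Sum>I\<in>{I. length I = n \<and> sum_list I \<le> N}. a I * prod_list (map2 (\<lambda>x i. x ^ i) xs I))"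

definition series_value :: "('k::field \<Rightarrow> int) \<Rightarrow> nat \<Rightarrow> nat \<Rightarrow> (nat list \<Rightarrow> 'k) \<Rightarrow> 'k list \<Rightarrow> 'k" where
  "series_value ord q n a xs =
     (THE s. \<forall>e>0. \<exists>N. \<forall>M\<ge>N. padic_abs ord q (partial_sum n a xs M - s) < e)"

definition restricted_fun :: "('k::field \<Rightarrow> int) \<Rightarrow> nat \<Rightarrow> nat \<Rightarrow> (nat list \<Rightarrow> 'k) \<Rightarrow> 'k list \<Rightarrow> 'k" where
  "restricted_fun ord q n a xs =
     (if length xs = n \<and> (\<forall>x\<in>set xs. x \<in> val_ring ord) then series_value ord q n a xs else 0)"

datatype 'k trm =
    Var nat
  | Cst 'k
  | Add "'k trm" "'k trm"
  | Mul "'k trm" "'k trm"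
  | Neg "'k trm"
  | RAn nat "nat list \<Rightarrow> 'k" "'k trm list"

datatype 'k fml =
    FEq "'k trm" "'k trm"
  | FNot "'k fml"
  | FAnd "'k fml" "'k fml"
  | FEx nat "'k fml"

fun eval_trm :: "('k::field \<Rightarrow> int) \<Rightarrow> nat \<Rightarrow> (nat \<Rightarrow> 'k) \<Rightarrow> 'k trm \<Rightarrow> 'k" where
  "eval_trm ord q env (Var i) = env i"
| "eval_trm ord q env (Cst c) = c"
| "eval_trm ord q env (Add s t) = eval_trm ord q env s + eval_trm ord q env t"
| "eval_trm ord q env (Mul s t) = eval_trm ord q env s * eval_trm ord q env t"
| "eval_trm ord q env (Neg s) = - eval_trm ord q env s"
| "eval_trm ord q env (RAn n a ts) = restricted_fun ord q n a (map (eval_trm ord q env) ts)"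

text \<open>Well-formed terms: if an = False (semi-algebraic structure) no analytic symbols are
  allowed; if an = True (subanalytic structure) analytic symbols must be restricted power
  series applied to the right number of arguments.\<close>
fun wf_trm :: "bool \<Rightarrow> ('k::field \<Rightarrow> int) \<Rightarrow> nat \<Rightarrow> 'k trm \<Rightarrow> bool" where
  "wf_trm an ord q (Var i) = True"
| "wf_trm an ord q (Cst c) = True"
| "wf_trm an ord q (Add s t) = (wf_trm an ord q s \<and> wf_trm an ord q t)"
| "wf_trm an ord q (Mul s t) = (wf_trm an ord q s \<and> wf_trm an ord q t)"
| "wf_trm an ord q (Neg s) = wf_trm an ord q s"
| "wf_trm an ord q (RAn n a ts) =
     (an \<and> restricted_series ord q n a \<and> length ts = n \<and> (\<forall>t\<in>set ts. wf_trm an ord q t))"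

fun wf_fml :: "bool \<Rightarrow> ('k::field \<Rightarrow> int) \<Rightarrow> nat \<Rightarrow> 'k fml \<Rightarrow> bool" where
  "wf_fml an ord q (FEq s t) = (wf_trm an ord q s \<and> wf_trm an ord q t)"
| "wf_fml an ord q (FNot p) = wf_fml an ord q p"
| "wf_fml an ord q (FAnd p r) = (wf_fml an ord q p \<and> wf_fml an ord q r)"
| "wf_fml an ord q (FEx v p) = wf_fml an ord q p"

fun sat :: "('k::field \<Rightarrow> int) \<Rightarrow> nat \<Rightarrow> (nat \<Rightarrow> 'k) \<Rightarrow> 'k fml \<Rightarrow> bool" where
  "sat ord q env (FEq s t) = (eval_trm ord q env s = eval_trm ord q env t)"
| "sat ord q env (FNot p) = (\<not> sat ord q env p)"
| "sat ord q env (FAnd p r) = (sat ord q env p \<and> sat ord q env r)"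
| "sat ord q env (FEx v p) = (\<exists>x. sat ord q (env(v := x)) p)"

definition list_env :: "'k::field list \<Rightarrow> nat \<Rightarrow> 'k" where
  "list_env xs i = (if i < length xs then xs ! i else 0)"

text \<open>Definable subsets of K^n (with parameters, which appear as constants Cst).\<close>
definition definable_set :: "bool \<Rightarrow> ('k::field \<Rightarrow> int) \<Rightarrow> nat \<Rightarrow> nat \<Rightarrow> 'k list set \<Rightarrow> bool" where
  "definable_set an ord q n X \<longleftrightarrow>
     (\<exists>\<phi>. wf_fml an ord q \<phi> \<and> X = {xs \<in> kspace n. sat ord q (list_env xs) \<phi>})"

definition definable_fun :: "bool \<Rightarrow> ('k::field \<Rightarrow> int) \<Rightarrow> nat \<Rightarrow> nat \<Rightarrow> 'k list set \<Rightarrow> ('k list \<Rightarrow> 'k) \<Rightarrow> bool" where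
  "definable_fun an ord q n A g \<longleftrightarrow>
     definable_set an ord q n A \<and> definable_set an ord q (Suc n) ((\<lambda>xs. xs @ [g xs]) ` A)"

end

theory Submission
  imports Defs
begin


definition EDef :: "bool \<Rightarrow> ('k::field \<Rightarrow> int) \<Rightarrow> nat \<Rightarrow> ((nat \<Rightarrow> 'k) \<Rightarrow> bool) \<Rightarrow> bool" where
  "EDef an ord q P \<longleftrightarrow> (\<exists>\<phi>. wf_fml an ord q \<phi> \<and> (\<forall>e. sat ord q e \<phi> = P e))"

lemma EDef_cong: "EDef an ord q P \<Longrightarrow> (\<And>e. P e = Q e) \<Longrightarrow> EDef an ord q Q"
  unfolding EDef_def by metis

lemma EDef_not: "EDef an ord q P \<Longrightarrow> EDef an ord q (\<lambda>e. \<not> P e)"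
  unfolding EDef_def by (metis sat.simps(2) wf_fml.simps(2))

lemma EDef_and: "EDef an ord q P \<Longrightarrow> EDef an ord q Q \<Longrightarrow> EDef an ord q (\<lambda>e. P e \<and> Q e)"
  unfolding EDef_def by (metis sat.simps(3) wf_fml.simps(3))

lemma EDef_or: "EDef an ord q P \<Longrightarrow> EDef an ord q Q \<Longrightarrow> EDef an ord q (\<lambda>e. P e \<or> Q e)"
  using EDef_not[of an ord q "\<lambda>e. \<not> P e \<and> \<not> Q e"] EDef_and[OF EDef_not EDef_not, of an ord q P Q]
  by (simp add: EDef_cong)

lemma EDef_imp: "EDef an ord q P \<Longrightarrow> EDef an ord q Q \<Longrightarrow> EDef an ord q (\<lambda>e. P e \<longrightarrow> Q e)"
  using EDef_or[OF EDef_not, of an ord q P Q] by (simp add: EDef_cong)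

lemma EDef_ex: "EDef an ord q P \<Longrightarrow> EDef an ord q (\<lambda>e. \<exists>x. P (e(v := x)))"
  unfolding EDef_def
  apply (elim exE conjE)
  subgoal for \<phi> by (rule exI[of _ "FEx v \<phi>"]) simp
  done

lemma EDef_all: "EDef an ord q P \<Longrightarrow> EDef an ord q (\<lambda>e. \<forall>x. P (e(v := x)))"
  using EDef_not[OF EDef_ex[OF EDef_not, of an ord q P v]] by (simp add: EDef_cong)

lemma EDef_eq: "wf_trm an ord q s \<Longrightarrow> wf_trm an ord q t \<Longrightarrow>
   EDef an ord q (\<lambda>e. eval_trm ord q e s = eval_trm ord q e t)"
  unfolding EDef_def by (rule exI[of _ "FEq s t"]) simp

lemma EDef_True: "EDef an ord q (\<lambda>e. True)"
  using EDef_eq[of an ord q "Cst 0" "Cst 0"] by simp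

lemma EDef_const: "EDef an ord q (\<lambda>e. b)"
  by (cases b) (use EDef_True EDef_not[OF EDef_True] in auto)

lemma EDef_all_lt: "(\<And>i. i < (n::nat) \<Longrightarrow> EDef an ord q (P i)) \<Longrightarrow> EDef an ord q (\<lambda>e. \<forall>i<n. P i e)"
proof (induction n)
  case 0 then show ?case using EDef_True by simp
next
  case (Suc n)
  have "EDef an ord q (\<lambda>e. (\<forall>i<n. P i e) \<and> P n e)"
    using Suc by (intro EDef_and) auto
  then show ?case by (rule EDef_cong) (auto simp: less_Suc_eq)
qed

lemma EDef_ex_lt: "(\<And>i. i < (n::nat) \<Longrightarrow> EDef an ord q (P i)) \<Longrightarrow> EDef an ord q (\<lambda>e. \<exists>i<n. P i e)"
proof (induction n)
  case 0 then show ?case using EDef_const[of an ord q False] by simp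
next
  case (Suc n)
  have "EDef an ord q (\<lambda>e. (\<exists>i<n. P i e) \<or> P n e)"
    using Suc by (intro EDef_or) auto
  then show ?case by (rule EDef_cong) (auto simp: less_Suc_eq)
qed

section \<open>substitution\<close>

fun trm_vars :: "'k trm \<Rightarrow> nat set" where
  "trm_vars (Var i) = {i}"
| "trm_vars (Cst c) = {}"
| "trm_vars (Add s t) = trm_vars s \<union> trm_vars t"
| "trm_vars (Mul s t) = trm_vars s \<union> trm_vars t"
| "trm_vars (Neg s) = trm_vars s"
| "trm_vars (RAn n a ts) = (\<Union>t\<in>set ts. trm_vars t)"

fun subst_trm :: "(nat \<Rightarrow> 'k trm) \<Rightarrow> 'k trm \<Rightarrow> 'k trm" where
  "subst_trm s (Var i) = s i"
| "subst_trm s (Cst c) = Cst c"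
| "subst_trm s (Add a b) = Add (subst_trm s a) (subst_trm s b)"
| "subst_trm s (Mul a b) = Mul (subst_trm s a) (subst_trm s b)"
| "subst_trm s (Neg a) = Neg (subst_trm s a)"
| "subst_trm s (RAn n a ts) = RAn n a (map (subst_trm s) ts)"

lemma eval_vars: "(\<And>j. j \<in> trm_vars t \<Longrightarrow> e j = e' j) \<Longrightarrow> eval_trm ord q e t = eval_trm ord q e' t"
proof (induction t)
  case (RAn n a ts)
  then show ?case by (auto intro!: arg_cong[where f="restricted_fun ord q n a"] map_cong)
qed auto

lemma eval_subst: "eval_trm ord q e (subst_trm s t) = eval_trm ord q (\<lambda>i. eval_trm ord q e (s i)) t"
proof (induction t)
  case (RAn n a ts)
  then show ?case by (auto intro!: arg_cong[where f="restricted_fun ord q n a"] map_cong)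
qed auto

lemma wf_subst: "wf_trm an ord q t \<Longrightarrow> (\<And>i. wf_trm an ord q (s i)) \<Longrightarrow> wf_trm an ord q (subst_trm s t)"
  by (induction t) auto

fun subst_fml :: "nat \<Rightarrow> (nat \<Rightarrow> 'k trm) \<Rightarrow> 'k fml \<Rightarrow> 'k fml" where
  "subst_fml N s (FEq a b) = FEq (subst_trm s a) (subst_trm s b)"
| "subst_fml N s (FNot p) = FNot (subst_fml N s p)"
| "subst_fml N s (FAnd p r) = FAnd (subst_fml N s p) (subst_fml N s r)"
| "subst_fml N s (FEx v p) = FEx N (subst_fml (Suc N) (s(v := Var N)) p)"

lemma wf_subst_fml: "wf_fml an ord q \<phi> \<Longrightarrow> (\<And>i. wf_trm an ord q (s i)) \<Longrightarrow> wf_fml an ord q (subst_fml N s \<phi>)"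
  by (induction \<phi> arbitrary: N s) (auto simp: wf_subst)

lemma sat_subst: "(\<And>i. trm_vars (s i) \<subseteq> {..<N}) \<Longrightarrow>
   sat ord q e (subst_fml N s \<phi>) = sat ord q (\<lambda>i. eval_trm ord q e (s i)) \<phi>"
proof (induction \<phi> arbitrary: N s e)
  case (FEq a b) then show ?case by (simp add: eval_subst)
next
  case (FNot p) then show ?case by simp
next
  case (FAnd p r) then show ?case by simp
next
  case (FEx v p)
  have vs: "trm_vars ((s(v := Var N)) i) \<subseteq> {..<Suc N}" for i
    using FEx.prems[of i] by (cases "i = v") auto
  have eq: "(\<lambda>i. eval_trm ord q (e(N := x)) ((s(v := Var N)) i)) = (\<lambda>i. eval_trm ord q e (s i))(v := x)" for x
  proof
    fix i show "eval_trm ord q (e(N := x)) ((s(v := Var N)) i) = ((\<lambda>i. eval_trm ord q e (s i))(v := x)) i"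
    proof (cases "i = v")
      case False
      have "eval_trm ord q (e(N := x)) (s i) = eval_trm ord q e (s i)"
        by (rule eval_vars) (use FEx.prems in fastforce)
      then show ?thesis using False by simp
    qed simp
  qed
  have "sat ord q (e(N := x)) (subst_fml (Suc N) (s(v := Var N)) p) = sat ord q ((\<lambda>i. eval_trm ord q e (s i))(v := x)) p" for x
    by (simp only: FEx.IH[where N="Suc N" and s="s(v := Var N)", OF vs] eq)
  then show ?case by simp
qed

lemma EDef_subst:
  assumes "EDef an ord q P" "\<And>i. wf_trm an ord q (s i)" "\<And>i. trm_vars (s i) \<subseteq> {..<N}"
  shows "EDef an ord q (\<lambda>e. P (\<lambda>i. eval_trm ord q e (s i)))"
proof -
  obtain \<phi> where "wf_fml an ord q \<phi>" "\<forall>e. sat ord q e \<phi> = P e" using assms(1) unfolding EDef_def by blast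
  then show ?thesis unfolding EDef_def
    by (intro exI[of _ "subst_fml N s \<phi>"]) (simp add: wf_subst_fml assms sat_subst)
qed

definition upd_block :: "(nat \<Rightarrow> 'k) \<Rightarrow> nat \<Rightarrow> 'k list \<Rightarrow> nat \<Rightarrow> 'k" where
  "upd_block e b ys i = (if b \<le> i \<and> i < b + length ys then ys ! (i - b) else e i)"

definition vecs :: "(nat \<Rightarrow> 'k) \<Rightarrow> nat \<Rightarrow> nat \<Rightarrow> 'k list" where
  "vecs e b r = map (\<lambda>j. e (b + j)) [0..<r]"

lemma upd_block_Cons: "upd_block e b (y # ys) = upd_block (e(b := y)) (Suc b) ys"
  by (rule ext) (auto simp: upd_block_def nth_Cons' Suc_diff_Suc)

lemma EDef_block_ex: "EDef an ord q P \<Longrightarrow> EDef an ord q (\<lambda>e. \<exists>ys. length ys = r \<and> P (upd_block e b ys))"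
proof (induction r arbitrary: b)
  case 0
  have "upd_block e b [] = e" for e :: "nat \<Rightarrow> 'a" by (auto simp: upd_block_def fun_eq_iff)
  with 0 show ?case by (simp add: EDef_cong)
next
  case (Suc r)
  have "EDef an ord q (\<lambda>e. \<exists>y. (\<lambda>e. \<exists>ys. length ys = r \<and> P (upd_block e (Suc b) ys)) (e(b := y)))"
    by (rule EDef_ex) (rule Suc.IH[OF Suc.prems])
  then show ?case
  proof (rule EDef_cong)
    fix e
    show "(\<exists>y. (\<lambda>e. \<exists>ys. length ys = r \<and> P (upd_block e (Suc b) ys)) (e(b := y))) =
          (\<exists>ys. length ys = Suc r \<and> P (upd_block e b ys))"
    proof
      assume "\<exists>y. (\<lambda>e. \<exists>ys. length ys = r \<and> P (upd_block e (Suc b) ys)) (e(b := y))"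
      then obtain y ys where "length ys = r" "P (upd_block (e(b := y)) (Suc b) ys)" by auto
      then show "\<exists>ys. length ys = Suc r \<and> P (upd_block e b ys)"
        by (intro exI[of _ "y # ys"]) (simp add: upd_block_Cons)
    next
      assume "\<exists>ys. length ys = Suc r \<and> P (upd_block e b ys)"
      then obtain ys where "length ys = Suc r" "P (upd_block e b ys)" by auto
      then obtain y ys' where "ys = y # ys'" "length ys' = r" by (cases ys) auto
      then show "\<exists>y. (\<lambda>e. \<exists>ys. length ys = r \<and> P (upd_block e (Suc b) ys)) (e(b := y))"
        using \<open>P (upd_block e b ys)\<close> by (auto simp: upd_block_Cons)
    qed
  qed
qed

lemma EDef_block_all: "EDef an ord q P \<Longrightarrow> EDef an ord q (\<lambda>e. \<forall>ys. length ys = r \<longrightarrow> P (upd_block e b ys))"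
  using EDef_not[OF EDef_block_ex[OF EDef_not, of an ord q P r b]] by (rule EDef_cong) auto

lemma length_vecs[simp]: "length (vecs e b r) = r"
  by (simp add: vecs_def)

lemma nth_vecs[simp]: "j < r \<Longrightarrow> vecs e b r ! j = e (b + j)"
  by (simp add: vecs_def)

lemma vecs_upd_same: "length ys = r \<Longrightarrow> vecs (upd_block e b ys) b r = ys"
  by (rule nth_equalityI) (auto simp: upd_block_def)

lemma vecs_upd_disj: "b' + r \<le> b \<or> b + length ys \<le> b' \<Longrightarrow> vecs (upd_block e b ys) b' r = vecs e b' r"
  by (rule nth_equalityI) (auto simp: upd_block_def)

lemma EDef_mem:
  assumes "definable_set an ord q r S"
  shows "EDef an ord q (\<lambda>e. vecs e b r \<in> S)"
proof -
  obtain \<phi> where phi: "wf_fml an ord q \<phi>" "S = {xs \<in> kspace r. sat ord q (list_env xs) \<phi>}"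
    using assms unfolding definable_set_def by blast
  have "EDef an ord q (\<lambda>e. sat ord q e \<phi>)" unfolding EDef_def using phi by blast
  then have "EDef an ord q (\<lambda>e. sat ord q (\<lambda>i. eval_trm ord q e (if i < r then Var (b + i) else Cst 0)) \<phi>)"
    by (rule EDef_subst[where N="b + r"]) auto
  then show ?thesis
  proof (rule EDef_cong)
    fix e
    have "(\<lambda>i. eval_trm ord q e (if i < r then Var (b + i) else Cst 0)) = list_env (vecs e b r)"
      by (auto simp: list_env_def fun_eq_iff)
    then show "sat ord q (\<lambda>i. eval_trm ord q e (if i < r then Var (b + i) else Cst 0)) \<phi> = (vecs e b r \<in> S)"
      using phi by (simp add: kspace_def)
  qed
qed




locale padic =
  fixes ord :: "'k::field_char_0 \<Rightarrow> int" and q :: nat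
  assumes P: "p_adic_field ord q"
begin

abbreviation ab where "ab \<equiv> padic_abs ord q"

lemma ord_mult: "x \<noteq> 0 \<Longrightarrow> y \<noteq> 0 \<Longrightarrow> ord (x * y) = ord x + ord y"
  using P unfolding p_adic_field_def by blast

lemma ord_add: "x \<noteq> 0 \<Longrightarrow> y \<noteq> 0 \<Longrightarrow> x + y \<noteq> 0 \<Longrightarrow> ord (x + y) \<ge> min (ord x) (ord y)"
  using P unfolding p_adic_field_def by blast

lemma pi_ex: "\<exists>\<pi>. \<pi> \<noteq> 0 \<and> ord \<pi> = 1"
  using P unfolding p_adic_field_def by blast

lemma complete: "(\<forall>e>0. \<exists>N. \<forall>m\<ge>N. \<forall>n\<ge>N. ab ((s :: nat \<Rightarrow> 'k) m - s n) < e) \<Longrightarrow>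
        (\<exists>l. \<forall>e>0. \<exists>N. \<forall>n\<ge>N. ab (s n - l) < e)"
  using P unfolding p_adic_field_def by blast

lemma ord_1[simp]: "ord 1 = 0"
  using ord_mult[of 1 1] by simp

lemma ord_m1[simp]: "ord (-1) = 0"
  using ord_mult[of "-1" "-1"] by simp

lemma ord_neg[simp]: "ord (- x) = ord x"
proof (cases "x = 0")
  case False then show ?thesis using ord_mult[of "-1" x] by simp
qed simp

lemma ord_pow: "x \<noteq> 0 \<Longrightarrow> ord (x ^ n) = int n * ord x"
  by (induction n) (auto simp: ord_mult algebra_simps)

lemma ord_of_nat: "ord (of_nat n) \<ge> 0" if "n > 0"
  using that
proof (induction n)
  case (Suc n)
  show ?case
  proof (cases "n = 0")
    case False
    have ne: "(of_nat n + 1 :: 'k) \<noteq> 0" using of_nat_eq_0_iff[of "Suc n", where 'a='k] by (simp add: add.commute)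
    have "ord (of_nat n + 1) \<ge> min (ord (of_nat n)) (ord 1)"
      using False ne by (intro ord_add) auto
    then show ?thesis using Suc False by (simp add: add.commute)
  qed simp
qed simp

lemma unit23: "ord (2::'k) = 0 \<or> ord (3::'k) = 0"
proof -
  have a: "ord (2::'k) \<ge> 0" using ord_of_nat[of 2] by simp
  have b: "ord (3::'k) \<ge> 0" using ord_of_nat[of 3] by simp
  have "ord (3 + (-2) :: 'k) \<ge> min (ord (3::'k)) (ord (-2::'k))"
    by (rule ord_add) auto
  then have "0 \<ge> min (ord (3::'k)) (ord (2::'k))"
    using ord_neg[of "2::'k"] by simp
  then show ?thesis using a b by linarith
qed

lemma q_ge2: "q \<ge> 2"
proof -
  have fin: "finite (residue_field ord)" "card (residue_field ord) = q"
    using P unfolding p_adic_field_def by auto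
  let ?c = "\<lambda>x. {y \<in> val_ring ord. x - y \<in> max_ideal ord}"
  have "?c 0 \<in> residue_field ord" "?c 1 \<in> residue_field ord"
    unfolding residue_field_def by (auto simp: val_ring_def)
  moreover have "?c 0 \<noteq> ?c 1"
  proof -
    have "0 \<in> ?c 0" by (auto simp: val_ring_def max_ideal_def)
    moreover have "0 \<notin> ?c 1" by (auto simp: max_ideal_def)
    ultimately show ?thesis by blast
  qed
  ultimately have "card {?c 0, ?c 1} \<le> card (residue_field ord)"
    by (intro card_mono fin) auto
  then show ?thesis using \<open>?c 0 \<noteq> ?c 1\<close> fin by simp
qed

lemma ab_def': "ab x = (if x = 0 then 0 else real q powr (- real_of_int (ord x)))"
  by (simp add: padic_abs_def)

lemma ab_0[simp]: "ab 0 = 0" by (simp add: padic_abs_def)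

lemma ab_nonneg[simp]: "ab x \<ge> 0" by (simp add: padic_abs_def)

lemma ab_eq0[simp]: "ab x = 0 \<longleftrightarrow> x = 0"
  using q_ge2 by (simp add: padic_abs_def)

lemma ab_pos: "x \<noteq> 0 \<Longrightarrow> ab x > 0"
  using ab_nonneg[of x] ab_eq0[of x] by linarith

lemma ab_mult: "ab (x * y) = ab x * ab y"
  using q_ge2 by (auto simp: padic_abs_def ord_mult powr_add[symmetric])

lemma ab_neg[simp]: "ab (- x) = ab x"
  by (simp add: padic_abs_def)

lemma ab_minus_comm: "ab (x - y) = ab (y - x)"
  by (metis ab_neg minus_diff_eq)

lemma ab_le_iff: "x \<noteq> 0 \<Longrightarrow> y \<noteq> 0 \<Longrightarrow> ab x \<le> ab y \<longleftrightarrow> ord y \<le> ord x"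
  using q_ge2 by (simp add: padic_abs_def)

lemma ab_ultra: "ab (x + y) \<le> max (ab x) (ab y)"
proof (cases "x = 0 \<or> y = 0 \<or> x + y = 0")
  case True then show ?thesis using ab_nonneg[of x] by (auto simp: le_max_iff_disj)
next
  case False
  then have "ord (x + y) \<ge> min (ord x) (ord y)" by (intro ord_add) auto
  then show ?thesis using False ab_le_iff by (cases "ord x \<le> ord y") (auto simp: max_def)
qed

lemma ab_add_le: "ab x \<le> M \<Longrightarrow> ab y \<le> M \<Longrightarrow> ab (x + y) \<le> M"
  using ab_ultra[of x y] by linarith

lemma ab_diff_le: "ab x \<le> M \<Longrightarrow> ab y \<le> M \<Longrightarrow> ab (x - y) \<le> M"
  using ab_add_le[of x M "- y"] by simp

lemma ab_tri: "ab (x - z) \<le> max (ab (x - y)) (ab (y - z))"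
  using ab_ultra[of "x - y" "y - z"] by simp

lemma ab_1[simp]: "ab 1 = 1"
  using q_ge2 by (simp add: padic_abs_def)

lemma ab_pow: "ab (x ^ n) = ab x ^ n"
  by (induction n) (simp_all add: ab_mult)

lemma ab_le1_iff: "ab x \<le> 1 \<longleftrightarrow> x \<in> val_ring ord"
proof -
  have "real q powr (- real_of_int (ord x)) \<le> real q powr 0 \<longleftrightarrow> - real_of_int (ord x) \<le> 0"
    using q_ge2 by (intro powr_le_cancel_iff) auto
  then show ?thesis using q_ge2 by (auto simp: padic_abs_def val_ring_def)
qed

lemma ab_div: "ab (x / y) = ab x / ab y"
proof (cases "y = 0")
  case False
  have "ab (x / y) * ab y = ab x" using False by (simp flip: ab_mult)
  then show ?thesis using False ab_pos[of y] by (simp add: field_simps)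
qed simp

end




context padic begin

lemma contraction_fixpoint:
  fixes g :: "'k \<Rightarrow> 'k" and c :: real
  assumes c: "0 < c" "c < 1"
    and g1: "\<And>s. ab s \<le> c \<Longrightarrow> ab (g s) \<le> c"
    and g2: "\<And>s w. ab s \<le> c \<Longrightarrow> ab w \<le> c \<Longrightarrow> ab (g s - g w) \<le> c * ab (s - w)"
  shows "\<exists>s. ab s \<le> c \<and> g s = s"
proof -
  define S where "S n = (g ^^ n) 0" for n
  have SS: "S (Suc n) = g (S n)" for n by (simp add: S_def)
  have Sb: "ab (S n) \<le> c" for n
  proof (induction n)
    case 0 show ?case using c by (simp add: S_def)
  next
    case (Suc n) then show ?case by (simp add: SS g1)
  qed
  have D: "ab (S (Suc n) - S n) \<le> c ^ Suc n" for n
  proof (induction n)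
    case 0 then show ?case using g1[of 0] c by (simp add: S_def)
  next
    case (Suc n)
    have "ab (S (Suc (Suc n)) - S (Suc n)) \<le> c * ab (S (Suc n) - S n)"
      unfolding SS[of "Suc n"] SS[of n] using Sb by (intro g2) (auto simp: SS[symmetric])
    also have "\<dots> \<le> c * c ^ Suc n" using Suc c by (intro mult_left_mono) auto
    finally show ?case by simp
  qed
  have cm: "c ^ Suc m \<le> c ^ Suc n" if "n \<le> m" for m n
    using c that less_imp_le[OF c(1)] by (intro power_decreasing) auto
  have Dm: "ab (S m - S n) \<le> c ^ Suc n" if "n \<le> m" for m n
    using that
  proof (induction m)
    case 0 then show ?case using c by simp
  next
    case (Suc m)
    show ?case
    proof (cases "n = Suc m")
      case True then show ?thesis using c by simp
    next
      case False
      then have "n \<le> m" using Suc by simp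
      have "ab (S (Suc m) - S n) \<le> max (ab (S (Suc m) - S m)) (ab (S m - S n))" by (rule ab_tri)
      also have "\<dots> \<le> c ^ Suc n" using D[of m] Suc.IH[OF \<open>n \<le> m\<close>] cm[OF \<open>n \<le> m\<close>] by auto
      finally show ?thesis .
    qed
  qed
  have "\<exists>l. \<forall>e>0. \<exists>N. \<forall>n\<ge>N. ab (S n - l) < e"
  proof (rule complete, intro allI impI)
    fix e :: real assume "e > 0"
    obtain N where N: "c ^ N < e" using real_arch_pow_inv[OF \<open>e > 0\<close> c(2)] by blast
    have "ab (S m - S n) < e" if "m \<ge> N" "n \<ge> N" for m n
    proof (cases "n \<le> m")
      case True
      have "c ^ Suc n \<le> c ^ N" using c that by (intro power_decreasing) auto
      then show ?thesis using Dm[OF True] N by linarith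
    next
      case False
      have "c ^ Suc m \<le> c ^ N" using c that by (intro power_decreasing) auto
      then show ?thesis using Dm[of m n] False N ab_minus_comm[of "S m" "S n"] by simp
    qed
    then show "\<exists>N. \<forall>m\<ge>N. \<forall>n\<ge>N. ab (S m - S n) < e" by blast
  qed
  then obtain l where l: "\<And>e. e > 0 \<Longrightarrow> \<exists>N. \<forall>n\<ge>N. ab (S n - l) < e" by blast
  have lb: "ab l \<le> c"
  proof -
    obtain N where "\<forall>n\<ge>N. ab (S n - l) < c" using l c by blast
    then have "ab (S N - l) < c" by simp
    then have "ab (l - S N) \<le> c" by (simp add: ab_minus_comm)
    then have "ab ((l - S N) + S N) \<le> c" using Sb by (intro ab_add_le) auto
    then show ?thesis by simp
  qed
  have "ab (g l - l) < e" if e: "e > 0" for e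
  proof -
    obtain N where N: "\<forall>n\<ge>N. ab (S n - l) < e" using l[OF e] by blast
    have a: "ab (g l - g (S N)) \<le> c * ab (l - S N)" using lb Sb by (intro g2)
    have "c * ab (l - S N) \<le> ab (l - S N)" using c by (simp add: mult_left_le_one_le)
    moreover have "ab (S N - l) < e" using N by simp
    ultimately have a': "ab (g l - S (Suc N)) < e" using a ab_minus_comm[of l "S N"] by (simp add: SS)
    have b: "ab (S (Suc N) - l) < e" using N by simp
    have "ab (g l - l) \<le> max (ab (g l - S (Suc N))) (ab (S (Suc N) - l))" by (rule ab_tri)
    then show ?thesis using a' b by simp
  qed
  then have "ab (g l - l) \<le> 0" by (meson less_irrefl not_le)
  then have "g l = l" using ab_nonneg[of "g l - l"] ab_eq0[of "g l - l"] by simp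
  then show ?thesis using lb by blast
qed

lemma root_exists:
  fixes \<pi> t :: 'k
  assumes pi: "\<pi> \<noteq> 0" "ord \<pi> = 1" and t: "ab t \<le> 1"
    and n: "(n = 2 \<or> n = 3) \<and> ord (of_nat n :: 'k) = 0"
  shows "\<exists>y. y ^ n = 1 + \<pi> * t"
proof -
  let ?c = "ab \<pi>"
  have cpos: "0 < ?c" using pi ab_pos by blast
  have c1: "?c < 1"
  proof -
    have "real q powr (- 1) < real q powr 0" using q_ge2 by (subst powr_less_cancel_iff) auto
    then show ?thesis using pi q_ge2 by (simp add: padic_abs_def)
  qed
  have pt: "ab (\<pi> * t) \<le> ?c" using t cpos by (simp add: ab_mult mult_left_le)
  have sq: "ab s * ab w \<le> ?c" if "ab s \<le> ?c" "ab w \<le> ?c" for s w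
  proof -
    have "ab s * ab w \<le> ?c * 1" using that c1 by (intro mult_mono) auto
    then show ?thesis by simp
  qed
  from n consider "n = 2" "ord (2::'k) = 0" | "n = 3" "ord (3::'k) = 0" by auto
  then show ?thesis
  proof cases
    case 1
    have a2: "ab (2::'k) = 1" using 1 q_ge2 by (simp add: padic_abs_def)
    define g where "g s = (\<pi> * t - s ^ 2) / 2" for s
    have "\<exists>s. ab s \<le> ?c \<and> g s = s"
    proof (rule contraction_fixpoint[OF cpos c1])
      fix s assume s: "ab s \<le> ?c"
      have "ab (s ^ 2) \<le> ?c" using sq[OF s s] by (simp add: ab_pow power2_eq_square ab_mult)
      then show "ab (g s) \<le> ?c" using pt by (simp add: g_def ab_div a2 ab_diff_le)
    next
      fix s w assume s: "ab s \<le> ?c" and w: "ab w \<le> ?c"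
      have eq: "g s - g w = (w - s) * (w + s) / 2" by (simp add: g_def field_simps power2_eq_square)
      moreover have "ab (w + s) \<le> ?c" using s w by (intro ab_add_le)
      ultimately show "ab (g s - g w) \<le> ?c * ab (s - w)"
        using ab_minus_comm[of w s] ab_nonneg[of "s - w"]
        unfolding eq ab_div ab_mult a2
        by (simp add: mult.commute[of "ab (s - w)"] mult_right_mono)
    qed
    then obtain s where "g s = s" by blast
    then have "2 * s = \<pi> * t - s ^ 2" by (simp add: g_def field_simps)
    then have "(1 + s) ^ 2 = 1 + \<pi> * t" by (simp add: power2_eq_square algebra_simps)
    then show ?thesis using 1 by blast
  next
    case 2
    have a3: "ab (3::'k) = 1" using 2 q_ge2 by (simp add: padic_abs_def)
    define g where "g s = (\<pi> * t - 3 * s ^ 2 - s ^ 3) / 3" for s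
    have cub: "ab (s ^ 3) \<le> ?c" if s: "ab s \<le> ?c" for s
    proof -
      have "ab s * ab s * ab s \<le> ?c * 1 * 1" using s c1 sq[OF s s] by (intro mult_mono) auto
      then show ?thesis by (simp add: ab_pow power3_eq_cube ab_mult)
    qed
    have "\<exists>s. ab s \<le> ?c \<and> g s = s"
    proof (rule contraction_fixpoint[OF cpos c1])
      fix s assume s: "ab s \<le> ?c"
      have "ab (3 * s ^ 2) \<le> ?c" using sq[OF s s] by (simp add: ab_mult a3 ab_pow power2_eq_square)
      then show "ab (g s) \<le> ?c" using pt cub[OF s] by (simp add: g_def ab_div a3 ab_diff_le)
    next
      fix s w assume s: "ab s \<le> ?c" and w: "ab w \<le> ?c"
      have eq: "g s - g w = (w - s) * (3 * (w + s) + (w * w + w * s + s * s)) / 3"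
        by (simp add: g_def field_simps power2_eq_square power3_eq_cube)
      moreover have "ab (3 * (w + s) + (w * w + w * s + s * s)) \<le> ?c"
        using s w sq[OF w w] sq[OF w s] sq[OF s s]
        by (intro ab_add_le) (auto simp: ab_mult a3 intro!: ab_add_le)
      ultimately show "ab (g s - g w) \<le> ?c * ab (s - w)"
        using ab_minus_comm[of w s] ab_nonneg[of "s - w"]
        unfolding eq ab_div ab_mult a3
        by (simp add: mult.commute[of "ab (s - w)"] mult_right_mono)
    qed
    then obtain s where "g s = s" by blast
    then have "3 * s = \<pi> * t - 3 * s ^ 2 - s ^ 3" by (simp add: g_def field_simps)
    then have "(1 + s) ^ 3 = 1 + \<pi> * t" by (simp add: power3_eq_cube power2_eq_square algebra_simps)
    then show ?thesis using 2 by blast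
  qed
qed

lemma ord_1_plus: "a \<noteq> 0 \<Longrightarrow> ord a < 0 \<Longrightarrow> 1 + a \<noteq> 0 \<and> ord (1 + a) = ord a"
proof -
  assume a: "a \<noteq> 0" "ord a < 0"
  have ne: "1 + a \<noteq> 0"
  proof
    assume "1 + a = 0" then have "a = -1" by (simp add: eq_neg_iff_add_eq_0 add.commute)
    then show False using a by simp
  qed
  have "ord (1 + a) \<ge> min (ord 1) (ord a)" using a ne by (intro ord_add) auto
  moreover have "ord ((1 + a) + (-1)) \<ge> min (ord (1 + a)) (ord (-1))" using a ne by (intro ord_add) auto
  ultimately show ?thesis using a ne by auto
qed

lemma val_ring_char:
  fixes \<pi> :: 'k
  assumes pi: "\<pi> \<noteq> 0" "ord \<pi> = 1"
    and n: "(n = 2 \<or> n = 3) \<and> ord (of_nat n :: 'k) = 0"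
  shows "x \<in> val_ring ord \<longleftrightarrow> (\<exists>y. y ^ n = 1 + \<pi> * x ^ n)"
proof
  assume "x \<in> val_ring ord"
  then have "ab (x ^ n) \<le> 1" using ab_le1_iff by (simp add: ab_pow power_le_one)
  then show "\<exists>y. y ^ n = 1 + \<pi> * x ^ n" by (rule root_exists[OF pi _ n])
next
  assume "\<exists>y. y ^ n = 1 + \<pi> * x ^ n"
  then obtain y where y: "y ^ n = 1 + \<pi> * x ^ n" by blast
  show "x \<in> val_ring ord"
  proof (rule ccontr)
    assume "x \<notin> val_ring ord"
    then have x: "x \<noteq> 0" "ord x < 0" by (auto simp: val_ring_def)
    have o: "ord (\<pi> * x ^ n) = 1 + int n * ord x" using pi x by (simp add: ord_mult ord_pow)
    have "ord (\<pi> * x ^ n) < 0" using o x n by auto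
    with ord_1_plus[of "\<pi> * x ^ n"] pi x
    have "1 + \<pi> * x ^ n \<noteq> 0" "ord (1 + \<pi> * x ^ n) = 1 + int n * ord x" by (auto simp: o)
    moreover have "y \<noteq> 0" using y n calculation by auto
    ultimately have "int n * ord y = 1 + int n * ord x" using y by (metis ord_pow)
    moreover have "n = 2 \<or> n = 3" using n by simp
    ultimately show False by (elim disjE; simp; presburger)
  qed
qed

end



fun tpow :: "'k::one trm \<Rightarrow> nat \<Rightarrow> 'k trm" where
  "tpow t 0 = Cst 1"
| "tpow t (Suc n) = Mul t (tpow t n)"

lemma eval_tpow[simp]: "eval_trm ord q e (tpow t n) = eval_trm ord q e t ^ n"
  by (induction n) auto

lemma wf_tpow[simp]: "wf_trm an ord q t \<Longrightarrow> wf_trm an ord q (tpow t n)"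
  by (induction n) auto

definition FOr :: "'k fml \<Rightarrow> 'k fml \<Rightarrow> 'k fml" where
  "FOr a b = FNot (FAnd (FNot a) (FNot b))"

lemma sat_FOr[simp]: "sat ord q e (FOr a b) = (sat ord q e a \<or> sat ord q e b)"
  by (simp add: FOr_def)

lemma wf_FOr[simp]: "wf_fml an ord q (FOr a b) = (wf_fml an ord q a \<and> wf_fml an ord q b)"
  by (simp add: FOr_def)

context padic begin

lemma EDef_le_base: "EDef an ord q (\<lambda>e. ab (e 0) \<le> ab (e 1))"
proof -
  obtain \<pi> :: 'k where pi: "\<pi> \<noteq> 0" "ord \<pi> = 1" using pi_ex by blast
  obtain n :: nat where n: "(n = 2 \<or> n = 3) \<and> ord (of_nat n :: 'k) = 0"
    using unit23 by (metis of_nat_numeral)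
  define \<phi> :: "'k fml" where "\<phi> = FOr (FEq (Var 0) (Cst 0))
     (FEx 2 (FAnd (FEq (Var 0) (Mul (Var 2) (Var 1)))
        (FEx 3 (FEq (tpow (Var 3) n) (Add (Cst 1) (Mul (Cst \<pi>) (tpow (Var 2) n)))))))"
  have wf: "wf_fml an ord q \<phi>" by (simp add: \<phi>_def)
  have key: "sat ord q e \<phi> = (ab (e 0) \<le> ab (e 1))" for e
  proof -
  have "sat ord q e \<phi> = (e 0 = 0 \<or> (\<exists>w. e 0 = w * e 1 \<and> (\<exists>y. y ^ n = 1 + \<pi> * w ^ n)))"
    by (simp add: \<phi>_def)
  also have "\<dots> = (e 0 = 0 \<or> (\<exists>w. e 0 = w * e 1 \<and> w \<in> val_ring ord))"
    using val_ring_char[OF pi n] by simp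
  also have "\<dots> = (ab (e 0) \<le> ab (e 1))"
  proof (cases "e 0 = 0")
    case False
    show ?thesis
    proof (cases "e 1 = 0")
      case True then show ?thesis using False ab_pos[of "e 0"] by auto
    next
      case e1: False
      have "(\<exists>w. e 0 = w * e 1 \<and> w \<in> val_ring ord) = (e 0 / e 1 \<in> val_ring ord)"
      proof
        assume "e 0 / e 1 \<in> val_ring ord"
        then show "\<exists>w. e 0 = w * e 1 \<and> w \<in> val_ring ord" using e1 by (intro exI[of _ "e 0 / e 1"]) simp
      qed (use e1 in auto)
      also have "\<dots> = (ab (e 0 / e 1) \<le> 1)" by (simp add: ab_le1_iff)
      also have "\<dots> = (ab (e 0) \<le> ab (e 1))" using ab_pos[OF e1] e1 by (simp add: ab_div divide_le_eq_1)
      finally show ?thesis using False by simp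
    qed
  qed simp
  finally show ?thesis .
  qed
  then show ?thesis unfolding EDef_def using wf by blast
qed

end



context padic begin

abbreviation vd where "vd x y \<equiv> vec_abs ord q (vec_diff x y)"

lemma vd_set: "length x = length y \<Longrightarrow> ab ` set (vec_diff x y) = (\<lambda>l. ab (x ! l - y ! l)) ` {..<length x}"
  by (auto simp: vec_diff_def set_zip image_iff)

lemma vd_alt: "length x = length y \<Longrightarrow> vd x y = Max (insert 0 ((\<lambda>l. ab (x ! l - y ! l)) ` {..<length x}))"
  by (simp add: vec_abs_def vd_set)

lemma vd_nonneg: "vd x y \<ge> 0"
  by (simp add: vec_abs_def)

lemma vd_nth_le: "length x = length y \<Longrightarrow> l < length x \<Longrightarrow> ab (x ! l - y ! l) \<le> vd x y"
  by (simp add: vd_alt)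

lemma vd_le: "length x = length y \<Longrightarrow> 0 \<le> M \<Longrightarrow> (\<And>l. l < length x \<Longrightarrow> ab (x ! l - y ! l) \<le> M) \<Longrightarrow> vd x y \<le> M"
  by (simp add: vd_alt)

lemma vd_attained: "length x = length y \<Longrightarrow> length x > 0 \<Longrightarrow> \<exists>l<length x. vd x y = ab (x ! l - y ! l)"
proof -
  assume a: "length x = length y" "length x > 0"
  let ?A = "(\<lambda>l. ab (x ! l - y ! l)) ` {..<length x}"
  have "Max (insert 0 ?A) \<in> insert 0 ?A" by (rule Max_in) auto
  moreover have "vd x y = Max (insert 0 ?A)" using a by (simp add: vd_alt)
  moreover have "ab (x ! 0 - y ! 0) \<le> vd x y" using a by (intro vd_nth_le) auto
  ultimately show ?thesis using a ab_nonneg[of "x ! 0 - y ! 0"]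
    by (metis (no_types, lifting) antisym image_iff insert_iff lessThan_iff)
qed

lemma vd_sym: "length x = length y \<Longrightarrow> vd x y = vd y x"
  by (simp add: vd_alt ab_minus_comm)

lemma vd_tri: "length x = length y \<Longrightarrow> length y = length z \<Longrightarrow> vd x z \<le> max (vd x y) (vd y z)"
proof (rule vd_le)
  fix l assume a: "length x = length y" "length y = length z" "l < length x"
  have "ab (x ! l - z ! l) \<le> max (ab (x ! l - y ! l)) (ab (y ! l - z ! l))" by (rule ab_tri)
  also have "\<dots> \<le> max (vd x y) (vd y z)" using a by (intro max.mono vd_nth_le) auto
  finally show "ab (x ! l - z ! l) \<le> max (vd x y) (vd y z)" .
qed (auto simp: vd_nonneg le_max_iff_disj)

lemma vd_self: "vd x x = 0"
  using vd_le[of x x 0] vd_nonneg[of x x] by simp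

lemma vd_zero: "length x = length y \<Longrightarrow> vd x y \<le> 0 \<Longrightarrow> x = y"
proof (rule nth_equalityI)
  fix l assume a: "length x = length y" "vd x y \<le> 0" "l < length x"
  then have "ab (x ! l - y ! l) \<le> 0" using vd_nth_le[of x y l] by simp
  then show "x ! l = y ! l" using ab_nonneg[of "x ! l - y ! l"] ab_eq0[of "x ! l - y ! l"] by simp
qed

lemma vd_iso: "length x = length y \<Longrightarrow> length y = length z \<Longrightarrow> vd x y < vd x z \<Longrightarrow> vd y z = vd x z"
proof -
  assume a: "length x = length y" "length y = length z" "vd x y < vd x z"
  have "vd y z \<le> max (vd y x) (vd x z)" using a by (intro vd_tri) auto
  moreover have "vd x z \<le> max (vd x y) (vd y z)" using a by (intro vd_tri) auto
  ultimately show ?thesis using a vd_sym[of x y] by (auto simp: max_def split: if_splits)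
qed

lemma vd_le_iff: "length x = r \<Longrightarrow> length y = r \<Longrightarrow> length z = r \<Longrightarrow>
  (vd x y \<le> vd x z) = (\<forall>l<r. \<exists>l'<r. ab (x ! l - y ! l) \<le> ab (x ! l' - z ! l'))"
proof (cases "r = 0")
  case True
  assume "length x = r" "length y = r" "length z = r"
  then show ?thesis using True by (simp add: vec_diff_def vec_abs_def)
next
  case False
  assume a: "length x = r" "length y = r" "length z = r"
  show ?thesis
  proof
    assume h: "vd x y \<le> vd x z"
    obtain l' where "l' < r" "vd x z = ab (x ! l' - z ! l')" using vd_attained[of x z] a False by auto
    then show "\<forall>l<r. \<exists>l'<r. ab (x ! l - y ! l) \<le> ab (x ! l' - z ! l')"
      using h a vd_nth_le[of x y] by (metis order.trans)
  next
    assume h: "\<forall>l<r. \<exists>l'<r. ab (x ! l - y ! l) \<le> ab (x ! l' - z ! l')"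
    show "vd x y \<le> vd x z"
    proof (rule vd_le)
      fix l assume "l < length x"
      then obtain l' where "l' < r" "ab (x ! l - y ! l) \<le> ab (x ! l' - z ! l')" using h a by auto
      then show "ab (x ! l - y ! l) \<le> vd x z" using a vd_nth_le[of x z l'] by auto
    qed (use a vd_nonneg in auto)
  qed
qed

lemma EDef_le_vars: "EDef an ord q (\<lambda>e. ab (e a - e b) \<le> ab (e c - e d))"
proof -
  define s :: "nat \<Rightarrow> 'k trm" where "s i = (if i = 0 then Add (Var a) (Neg (Var b))
      else if i = 1 then Add (Var c) (Neg (Var d)) else Cst 0)" for i
  have "EDef an ord q (\<lambda>e. (\<lambda>e. ab (e 0) \<le> ab (e 1)) (\<lambda>i. eval_trm ord q e (s i)))"
    by (rule EDef_subst[OF EDef_le_base, where N="Suc (a + b + c + d)"]) (auto simp: s_def)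
  then show ?thesis by (simp add: s_def)
qed

end



locale lctx = padic ord q for ord :: "'k::field_char_0 \<Rightarrow> int" and q +
  fixes r :: nat and k :: nat and Xs :: "nat \<Rightarrow> 'k list set"
  assumes Xs_sub: "\<And>i. i < k \<Longrightarrow> Xs i \<subseteq> kspace r" and k1: "k \<ge> 1"
begin

definition Rr where "Rr x i m \<longleftrightarrow> (\<forall>z\<in>Xs m. \<exists>y\<in>Xs i. vd x y \<le> vd x z)"
definition best where "best x i \<longleftrightarrow> (\<forall>m<k. Rr x i m)"
definition sel where "sel x = (LEAST i. i < k \<and> best x i)"

lemma Rr_trans: "Rr x i j \<Longrightarrow> Rr x j l \<Longrightarrow> Rr x i l"
  unfolding Rr_def by (meson order.trans)

lemma Rr_total: "Rr x i j \<or> Rr x j i"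
  unfolding Rr_def by (meson linear order.trans)

lemma best_ex_aux: "n \<ge> 1 \<Longrightarrow> \<exists>i<n. \<forall>m<n. Rr x i m"
proof (induction n rule: dec_induct)
  case base
  then show ?case using Rr_total[of x 0 0] by auto
next
  case (step n)
  then obtain i where i: "i < n" "\<forall>m<n. Rr x i m" by blast
  show ?case
  proof (cases "Rr x i n")
    case True then show ?thesis using i by (auto simp: less_Suc_eq)
  next
    case False
    then have "Rr x n i" using Rr_total by blast
    then have "\<forall>m<n. Rr x n m" using i Rr_trans by blast
    moreover have "Rr x n n" using Rr_total[of x n n] by blast
    ultimately show ?thesis by (auto simp: less_Suc_eq)
  qed
qed

lemma best_ex: "\<exists>i<k. best x i"
  using best_ex_aux[OF k1] by (auto simp: best_def)

lemma sel: "sel x < k \<and> best x (sel x)"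
  using best_ex[of x] unfolding sel_def by (metis (mono_tags, lifting) LeastI)

lemma sel_unique: "i < k \<Longrightarrow> best x i \<Longrightarrow> (\<forall>j<i. \<not> best x j) \<Longrightarrow> sel x = i"
  unfolding sel_def by (rule Least_equality) (auto simp: not_less[symmetric])

lemma sel_least: "j < sel x \<Longrightarrow> \<not> best x j"
proof
  assume a: "j < sel x" "best x j"
  then have "j < k" using sel[of x] by simp
  then have "sel x \<le> j" unfolding sel_def using a by (intro Least_le) simp
  then show False using a by simp
qed

lemma mem_sel: "m < k \<Longrightarrow> x \<in> Xs m \<Longrightarrow> x \<in> Xs (sel x)"
proof -
  assume a: "m < k" "x \<in> Xs m"
  have "Rr x (sel x) m" using sel[of x] a by (auto simp: best_def)
  then obtain y where y: "y \<in> Xs (sel x)" "vd x y \<le> vd x x" using a unfolding Rr_def by blast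
  have "length x = r" "length y = r" using a y Xs_sub sel[of x] by (auto simp: kspace_def)
  then have "x = y" using y vd_self[of x] by (intro vd_zero) auto
  then show ?thesis using y by simp
qed

lemma near_aux:
  assumes x: "x \<in> kspace r" and y: "y \<in> kspace r"
    and far: "\<forall>x'\<in>Xs (sel x). vd x x' > vd x y"
  shows "sel y = sel x"
proof -
  let ?i = "sel x"
  have lens: "length x = r" "length y = r" using x y by (auto simp: kspace_def)
  have farall: "vd x z > vd x y" if "m < k" "z \<in> Xs m" for m z
  proof -
    have "best x ?i" using sel[of x] by simp
    then have "Rr x ?i m" using that(1) unfolding best_def by simp
    then have "\<exists>w\<in>Xs ?i. vd x w \<le> vd x z" using that(2) unfolding Rr_def by simp
    then obtain w where w: "w \<in> Xs ?i" "vd x w \<le> vd x z" by blast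
    have "vd x w > vd x y" using bspec[OF far w(1)] .
    then show ?thesis using w(2) by linarith
  qed
  have same: "vd y z = vd x z" if "m < k" "z \<in> Xs m" for m z
  proof -
    have "length z = r" using that Xs_sub by (auto simp: kspace_def)
    have "vd x y < vd x z" by (rule farall[OF that])
    with vd_iso[of x y z] \<open>length z = r\<close> lens show ?thesis by simp
  qed
  have "Rr y i m = Rr x i m" if "i < k" "m < k" for i m
  proof -
    have "(\<forall>z\<in>Xs m. \<exists>y'\<in>Xs i. vd y y' \<le> vd y z) = (\<forall>z\<in>Xs m. \<exists>y'\<in>Xs i. vd x y' \<le> vd x z)"
    proof (intro ball_cong[OF refl] bex_cong[OF refl])
      fix z y' assume "z \<in> Xs m" "y' \<in> Xs i"
      then show "(vd y y' \<le> vd y z) = (vd x y' \<le> vd x z)"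
        using same[OF that(2)] same[OF that(1)] by metis
    qed
    then show ?thesis unfolding Rr_def .
  qed
  then have "best y i = best x i" if "i < k" for i
    unfolding best_def using that by simp
  then have "(\<lambda>i. i < k \<and> best y i) = (\<lambda>i. i < k \<and> best x i)" by auto
  then show ?thesis unfolding sel_def by (rule arg_cong)
qed

lemma near:
  assumes x: "x \<in> kspace r" and y: "y \<in> kspace r" and ne: "sel x \<noteq> sel y"
  shows "\<exists>x'\<in>Xs (sel x). vd x x' \<le> vd x y"
proof (rule ccontr)
  assume "\<not> (\<exists>x'\<in>Xs (sel x). vd x x' \<le> vd x y)"
  then have "\<forall>x'\<in>Xs (sel x). vd x x' > vd x y" by (simp add: not_le)
  then show False using near_aux[OF x y] ne by simp
qed

end



context lctx begin

lemma EDef_Rr: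
  assumes def: "\<And>i. i < k \<Longrightarrow> definable_set an ord q r (Xs i)" and ik: "i < k" "m < k"
  shows "EDef an ord q (\<lambda>e. Rr (vecs e 0 r) i m)"
proof -
  define B1 where "B1 = Suc r"
  define B2 where "B2 = Suc (2 * r)"
  define P0 where "P0 e \<longleftrightarrow> vecs e B2 r \<in> Xs i \<and> (\<forall>l<r. \<exists>l'<r. ab (e l - e (B2 + l)) \<le> ab (e l' - e (B1 + l')))" for e
  have d0: "EDef an ord q P0"
    unfolding P0_def
    by (intro EDef_and EDef_mem def ik EDef_all_lt EDef_ex_lt EDef_le_vars)
  define P1 where "P1 e \<longleftrightarrow> (\<exists>ys. length ys = r \<and> P0 (upd_block e B2 ys))" for e
  have d1: "EDef an ord q P1" unfolding P1_def by (rule EDef_block_ex[OF d0])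
  define P2 where "P2 e \<longleftrightarrow> (vecs e B1 r \<in> Xs m \<longrightarrow> P1 e)" for e
  have d2: "EDef an ord q P2" unfolding P2_def by (intro EDef_imp EDef_mem def ik d1)
  define P3 where "P3 e \<longleftrightarrow> (\<forall>zs. length zs = r \<longrightarrow> P2 (upd_block e B1 zs))" for e
  have d3: "EDef an ord q P3" unfolding P3_def by (rule EDef_block_all[OF d2])
  show ?thesis
  proof (rule EDef_cong[OF d3])
    fix e :: "nat \<Rightarrow> 'k"
    let ?x = "vecs e 0 r"
    have P0e: "P0 (upd_block (upd_block e B1 zs) B2 ys) =
       (ys \<in> Xs i \<and> (\<forall>l<r. \<exists>l'<r. ab (?x ! l - ys ! l) \<le> ab (?x ! l' - zs ! l')))"
      if "length zs = r" "length ys = r" for zs ys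
    proof -
      have "vecs (upd_block (upd_block e B1 zs) B2 ys) B2 r = ys" using that by (simp add: vecs_upd_same)
      moreover have "upd_block (upd_block e B1 zs) B2 ys l = e l" if "l < r" for l
        using that by (simp add: upd_block_def B1_def B2_def)
      moreover have "upd_block (upd_block e B1 zs) B2 ys (B2 + l) = ys ! l" if "l < r" for l
        using that \<open>length ys = r\<close> by (simp add: upd_block_def B1_def B2_def)
      moreover have "upd_block (upd_block e B1 zs) B2 ys (B1 + l) = zs ! l" if "l < r" for l
        using that \<open>length zs = r\<close> by (simp add: upd_block_def B1_def B2_def)
      ultimately show ?thesis unfolding P0_def by (simp cong: conj_cong)
    qed
    have P2e: "P2 (upd_block e B1 zs) = (zs \<in> Xs m \<longrightarrow> (\<exists>ys\<in>Xs i. vd ?x ys \<le> vd ?x zs))"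
      if "length zs = r" for zs
    proof -
      have v1: "vecs (upd_block e B1 zs) B1 r = zs" using that by (simp add: vecs_upd_same)
      have "P1 (upd_block e B1 zs) = (\<exists>ys. length ys = r \<and> ys \<in> Xs i \<and> (\<forall>l<r. \<exists>l'<r. ab (?x ! l - ys ! l) \<le> ab (?x ! l' - zs ! l')))"
        unfolding P1_def using P0e[OF that] by auto
      also have "\<dots> = (\<exists>ys\<in>Xs i. vd ?x ys \<le> vd ?x zs)"
      proof
        assume "\<exists>ys. length ys = r \<and> ys \<in> Xs i \<and> (\<forall>l<r. \<exists>l'<r. ab (?x ! l - ys ! l) \<le> ab (?x ! l' - zs ! l'))"
        then obtain ys where ys: "length ys = r" "ys \<in> Xs i" "\<forall>l<r. \<exists>l'<r. ab (?x ! l - ys ! l) \<le> ab (?x ! l' - zs ! l')" by blast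
        then have "vd ?x ys \<le> vd ?x zs" using vd_le_iff[of ?x r ys zs] that by simp
        then show "\<exists>ys\<in>Xs i. vd ?x ys \<le> vd ?x zs" using ys by blast
      next
        assume "\<exists>ys\<in>Xs i. vd ?x ys \<le> vd ?x zs"
        then obtain ys where ys: "ys \<in> Xs i" "vd ?x ys \<le> vd ?x zs" by blast
        have "length ys = r" using ys Xs_sub[OF ik(1)] by (auto simp: kspace_def)
        then show "\<exists>ys. length ys = r \<and> ys \<in> Xs i \<and> (\<forall>l<r. \<exists>l'<r. ab (?x ! l - ys ! l) \<le> ab (?x ! l' - zs ! l'))"
          using ys vd_le_iff[of ?x r ys zs] that by auto
      qed
      finally show ?thesis unfolding P2_def v1 by simp
    qed
    have "P3 e = (\<forall>zs. length zs = r \<longrightarrow> (zs \<in> Xs m \<longrightarrow> (\<exists>ys\<in>Xs i. vd ?x ys \<le> vd ?x zs)))"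
      unfolding P3_def using P2e by simp
    also have "\<dots> = Rr ?x i m"
      unfolding Rr_def using Xs_sub[OF ik(2)] by (auto simp: kspace_def)
    finally show "P3 e = Rr ?x i m" .
  qed
qed

lemma EDef_best:
  assumes def: "\<And>i. i < k \<Longrightarrow> definable_set an ord q r (Xs i)" and ik: "i < k"
  shows "EDef an ord q (\<lambda>e. best (vecs e 0 r) i)"
  unfolding best_def by (rule EDef_all_lt) (rule EDef_Rr[OF def ik])

lemma graph_char:
  assumes "length x = r"
  shows "x @ [z] \<in> (\<lambda>xs. xs @ [g xs]) ` kspace r \<longleftrightarrow> z = g x"
  using assms by (auto simp: kspace_def)

lemma vecs_Suc: "vecs e b (Suc r') = vecs e b r' @ [e (b + r')]"
  by (simp add: vecs_def)

lemma definable_sel_graph: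
  assumes def: "\<And>i. i < k \<Longrightarrow> definable_set an ord q r (Xs i)"
    and gdef: "\<And>i. i < k \<Longrightarrow> definable_fun an ord q r (kspace r) (ft i)"
  shows "definable_set an ord q (Suc r) ((\<lambda>xs. xs @ [ft (sel xs) xs]) ` kspace r)"
proof -
  have gd: "definable_set an ord q (Suc r) ((\<lambda>xs. xs @ [ft i xs]) ` kspace r)" if "i < k" for i
    using gdef[OF that] unfolding definable_fun_def by blast
  define G where "G e \<longleftrightarrow> (\<exists>i<k. (best (vecs e 0 r) i \<and> (\<forall>j<i. \<not> best (vecs e 0 r) j))
      \<and> vecs e 0 (Suc r) \<in> (\<lambda>xs. xs @ [ft i xs]) ` kspace r)" for e
  have "EDef an ord q G"
    unfolding G_def
  proof (rule EDef_ex_lt)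
    fix i assume i: "i < k"
    have a: "EDef an ord q (\<lambda>e. best (vecs e 0 r) i)" by (rule EDef_best[OF def i])
    have b: "EDef an ord q (\<lambda>e. \<forall>j<i. \<not> best (vecs e 0 r) j)"
    proof (rule EDef_all_lt)
      fix j assume "j < i"
      then have "j < k" using i by simp
      then show "EDef an ord q (\<lambda>e. \<not> best (vecs e 0 r) j)" by (intro EDef_not EDef_best[OF def])
    qed
    have c: "EDef an ord q (\<lambda>e. vecs e 0 (Suc r) \<in> (\<lambda>xs. xs @ [ft i xs]) ` kspace r)"
      by (rule EDef_mem[OF gd[OF i]])
    show "EDef an ord q (\<lambda>e. (best (vecs e 0 r) i \<and> (\<forall>j<i. \<not> best (vecs e 0 r) j)) \<and>
        vecs e 0 (Suc r) \<in> (\<lambda>xs. xs @ [ft i xs]) ` kspace r)"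
      by (rule EDef_and[OF EDef_and[OF a b] c])
  qed
  then obtain \<phi> where phi: "wf_fml an ord q \<phi>" "\<And>e. sat ord q e \<phi> = G e"
    unfolding EDef_def by blast
  have Ge: "G e = (e r = ft (sel (vecs e 0 r)) (vecs e 0 r))" for e
  proof -
    let ?x = "vecs e 0 r"
    have "G e = (\<exists>i<k. (best ?x i \<and> (\<forall>j<i. \<not> best ?x j)) \<and> e r = ft i ?x)"
      unfolding G_def vecs_Suc using graph_char[of ?x "e r"] by simp
    also have "\<dots> = (e r = ft (sel ?x) ?x)"
    proof
      assume "\<exists>i<k. (best ?x i \<and> (\<forall>j<i. \<not> best ?x j)) \<and> e r = ft i ?x"
      then obtain i where i: "i < k" "best ?x i" "\<forall>j<i. \<not> best ?x j" "e r = ft i ?x" by blast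
      have "sel ?x = i" using sel_unique[OF i(1) i(2) i(3)] .
      then show "e r = ft (sel ?x) ?x" using i(4) by simp
    next
      assume "e r = ft (sel ?x) ?x"
      moreover have "\<forall>j<sel ?x. \<not> best ?x j" using sel_least[of _ ?x] by blast
      ultimately show "\<exists>i<k. (best ?x i \<and> (\<forall>j<i. \<not> best ?x j)) \<and> e r = ft i ?x"
        using sel[of ?x] by (intro exI[of _ "sel ?x"]) simp
    qed
    finally show ?thesis .
  qed
  have "{w \<in> kspace (Suc r). sat ord q (list_env w) \<phi>} = (\<lambda>xs. xs @ [ft (sel xs) xs]) ` kspace r"
  proof (intro equalityI subsetI)
    fix w assume "w \<in> {w \<in> kspace (Suc r). sat ord q (list_env w) \<phi>}"
    then have w: "length w = Suc r" "G (list_env w)" using phi by (auto simp: kspace_def)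
    have vx: "vecs (list_env w) 0 r = take r w"
      using w by (intro nth_equalityI) (simp_all add: list_env_def)
    have wr: "list_env w r = w ! r" using w by (simp add: list_env_def)
    have "w = take r w @ [w ! r]" using take_Suc_conv_app_nth[of r w] w by simp
    moreover have "w ! r = ft (sel (take r w)) (take r w)" using Ge[of "list_env w"] w(2) vx wr by simp
    ultimately have "w = take r w @ [ft (sel (take r w)) (take r w)]" by simp
    moreover have "take r w \<in> kspace r" using w by (simp add: kspace_def)
    ultimately show "w \<in> (\<lambda>xs. xs @ [ft (sel xs) xs]) ` kspace r" by (rule image_eqI)
  next
    fix w assume "w \<in> (\<lambda>xs. xs @ [ft (sel xs) xs]) ` kspace r"
    then obtain xs where xs: "length xs = r" "w = xs @ [ft (sel xs) xs]" by (auto simp: kspace_def)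
    have vx: "vecs (list_env w) 0 r = xs"
      using xs by (intro nth_equalityI) (auto simp: list_env_def nth_append)
    have wr: "list_env w r = ft (sel xs) xs" using xs by (simp add: list_env_def nth_append)
    have "G (list_env w)" using Ge vx wr by simp
    then show "w \<in> {w \<in> kspace (Suc r). sat ord q (list_env w) \<phi>}"
      using phi xs by (simp add: kspace_def)
  qed
  then show ?thesis unfolding definable_set_def using phi(1) by blast
qed

end



theorem mainTheorem2:
  fixes an :: bool
    and ord :: "'k::field_char_0 \<Rightarrow> int" and q :: nat
    and r :: nat and X :: "'k list set" and lam :: real and f :: "'k list \<Rightarrow> 'k"
    and k :: nat and Xs :: "nat \<Rightarrow> 'k list set" and Lam :: "nat \<Rightarrow> real"
    and ft :: "nat \<Rightarrow> 'k list \<Rightarrow> 'k"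
  assumes "p_adic_field ord q"
    and "X \<subseteq> kspace r"
    and "definable_set an ord q r X"
    and "lam > 0"
    and "definable_fun an ord q r X f"
    and "lipschitz_on ord q X f lam"
    and "k \<ge> 1"
    and "X = (\<Union>i\<in>{..<k}. Xs i)"
    and "\<And>i. i < k \<Longrightarrow> definable_set an ord q r (Xs i)"
    and "\<And>i. i < k \<Longrightarrow> Lam i \<ge> lam"
    and "\<And>i. i < k \<Longrightarrow> definable_fun an ord q r (kspace r) (ft i)"
    and "\<And>i. i < k \<Longrightarrow> lipschitz_on ord q (kspace r) (ft i) (Lam i)"
    and "\<And>i x. i < k \<Longrightarrow> x \<in> Xs i \<Longrightarrow> ft i x = f x"
  shows "\<exists>F. definable_fun an ord q r (kspace r) F
           \<and> lipschitz_on ord q (kspace r) F (Max (Lam ` {..<k}))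
           \<and> (\<forall>x\<in>X. F x = f x)"
proof -
  note A = assms
  interpret padic ord q using A(1) by unfold_locales
  have Xs_sub: "Xs i \<subseteq> kspace r" if "i < k" for i
    using A(9)[OF that] unfolding definable_set_def by blast
  interpret L: lctx ord q r k Xs using Xs_sub A(7) by unfold_locales auto
  define F where "F x = ft (L.sel x) x" for x
  define Lm where "Lm = Max (Lam ` {..<k})"
  have LamLm: "Lam i \<le> Lm" if "i < k" for i
    unfolding Lm_def using that by (intro Max_ge) auto
  have lamLm: "lam \<le> Lm" using A(10)[of 0] LamLm[of 0] A(7) by simp
  have Lm0: "Lm \<ge> 0" using lamLm A(4) by simp
  have def1: "definable_fun an ord q r (kspace r) F"
  proof -
    have "definable_set an ord q r (kspace r)"
      unfolding definable_set_def
      by (rule exI[of _ "FEq (Cst 0) (Cst 0)"]) (auto simp: kspace_def)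
    moreover have "definable_set an ord q (Suc r) ((\<lambda>xs. xs @ [F xs]) ` kspace r)"
      unfolding F_def by (rule L.definable_sel_graph[OF A(9) A(11)])
    ultimately show ?thesis unfolding definable_fun_def by blast
  qed
  have ftL: "ab (ft i a - ft i b) \<le> Lm * vd a b" if "i < k" "a \<in> kspace r" "b \<in> kspace r" for i a b
  proof -
    have "ab (ft i a - ft i b) \<le> Lam i * vd a b"
      using A(12)[OF that(1)] that unfolding lipschitz_on_def by blast
    also have "\<dots> \<le> Lm * vd a b" using LamLm[OF that(1)] vd_nonneg[of a b] by (rule mult_right_mono)
    finally show ?thesis .
  qed
  have lip: "lipschitz_on ord q (kspace r) F Lm"
    unfolding lipschitz_on_def
  proof (intro ballI)
    fix a b :: "'k list" assume a: "a \<in> kspace r" and b: "b \<in> kspace r"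
    let ?i = "L.sel a" and ?j = "L.sel b" and ?d = "vd a b"
    have i: "?i < k" and j: "?j < k" using L.sel by auto
    have la: "length a = r" and lb: "length b = r" using a b by (auto simp: kspace_def)
    show "ab (F a - F b) \<le> Lm * ?d"
    proof (cases "?i = ?j")
      case True
      then show ?thesis unfolding F_def using ftL[OF i a b] by simp
    next
      case False
      obtain a' where a': "a' \<in> Xs ?i" "vd a a' \<le> ?d" using L.near[OF a b False] by blast
      obtain b' where b': "b' \<in> Xs ?j" "vd b b' \<le> vd b a" using L.near[OF b a] False by metis
      have a'k: "a' \<in> kspace r" and b'k: "b' \<in> kspace r" using a' b' Xs_sub i j by auto
      have la': "length a' = r" and lb': "length b' = r" using a'k b'k by (auto simp: kspace_def)
      have bb': "vd b b' \<le> ?d" using b'(2) vd_sym[of b a] la lb by simp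
      have a'X: "a' \<in> X" and b'X: "b' \<in> X" using a' b' i j A(8) by auto
      have fa': "ft ?i a' = f a'" using A(13)[OF i a'(1)] .
      have fb': "ft ?j b' = f b'" using A(13)[OF j b'(1)] .
      have d1: "vd a' b \<le> max (vd a' a) (vd a b)" using la la' lb by (intro vd_tri) auto
      have d2: "vd a' b' \<le> max (vd a' b) (vd b b')" using la' lb lb' by (intro vd_tri) auto
      have "vd a' a = vd a a'" using vd_sym[of a a'] la la' by simp
      then have dab': "vd a' b' \<le> ?d" using d1 d2 a'(2) bb' by simp
      have t1: "ab (ft ?i a - ft ?i a') \<le> Lm * ?d"
        using ftL[OF i a a'k] a'(2) Lm0 by (meson mult_left_mono order.trans)
      have t2: "ab (f a' - f b') \<le> Lm * ?d"
      proof -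
        have "ab (f a' - f b') \<le> lam * vd a' b'"
          using A(6) a'X b'X unfolding lipschitz_on_def by blast
        also have "\<dots> \<le> Lm * vd a' b'" using lamLm vd_nonneg[of a' b'] by (rule mult_right_mono)
        also have "\<dots> \<le> Lm * ?d" using dab' Lm0 by (rule mult_left_mono)
        finally show ?thesis .
      qed
      have t3: "ab (ft ?j b' - ft ?j b) \<le> Lm * ?d"
      proof -
        have "vd b' b = vd b b'" using vd_sym[of b b'] lb lb' by simp
        then show ?thesis using ftL[OF j b'k b] bb' Lm0 by (metis mult_left_mono order.trans)
      qed
      have eq: "F a - F b = ((ft ?i a - ft ?i a') + (f a' - f b')) + (ft ?j b' - ft ?j b)"
        unfolding F_def using fa' fb' by simp
      show ?thesis unfolding eq by (intro ab_add_le t1 t2 t3)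
    qed
  qed
  have agree: "\<forall>x\<in>X. F x = f x"
  proof
    fix x assume "x \<in> X"
    then obtain m where m: "m < k" "x \<in> Xs m" using A(8) by auto
    have "x \<in> Xs (L.sel x)" using L.mem_sel[OF m] .
    then show "F x = f x" unfolding F_def using A(13) L.sel by blast
  qed
  show ?thesis using def1 lip agree unfolding Lm_def by blast
qed


end
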